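(* For any nontrivial connected graph $G$, $\gamma_t(G)\le \gamma_{qtR}(G)\le 2\gamma_t(G)$. Furthermore: (i) $\gamma_{qtR}(G)=\gamma_t(G)$ if and only if $G\cong P_2$; (ii) $\gamma_{qtR}(G)=\gamma_t(G)+1$ if and only if $\gamma_{qtR}(G)=3$; (iii) $\gamma_{qtR}(G)=2\gamma_t(G)$ if and only if $\gamma_{qtR}(G)=\gamma_{tR}(G)$ and $\gamma_{tR}(G)=2\gamma_t(G)$.
   Context: All graphs are finite, simple and undirected. $\gamma_t(G)$ is the total domination number: the minimum size of a set $S\subseteq V(G)$ such that every vertex of $G$ has a neighbor in $S$. For a function $f:V(G)\to\{0,1,2\}$ write $V_i=\{v: f(v)=i\}$; its weight is $|V_1|+2|V_2|$. A total Roman dominating function (TRDF) is an $f$ in which every vertex labeled $0$ has a neighbor labeled $2$ and the subgraph induced by $V_1\cup V_2$ has no isolated vertices; $\gamma_{tR}(G)$ is the minimum weight of a TRDF. A quasi-total Roman dominating function (QTRDF) is an $f$ such that every vertex labeled $0$ is adjacent to a vertex labeled $2$, and every vertex that is isolated in the subgraph induced by $V_1\cup V_2$ has label $1$; $\gamma_{qtR}(G)$ is the minimum weight of a QTRDF. *)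

theory Defs
  imports Main
begin

definition graph :: "'a set \<Rightarrow> ('a \<Rightarrow> 'a \<Rightarrow> bool) \<Rightarrow> bool" where
  "graph V E \<longleftrightarrow> finite V \<and> (\<forall>x y. E x y \<longrightarrow> x \<in> V \<and> y \<in> V)
     \<and> (\<forall>x y. E x y \<longrightarrow> E y x) \<and> (\<forall>x. \<not> E x x)"

definition connected_graph :: "'a set \<Rightarrow> ('a \<Rightarrow> 'a \<Rightarrow> bool) \<Rightarrow> bool" where
  "connected_graph V E \<longleftrightarrow> (\<forall>x\<in>V. \<forall>y\<in>V. E\<^sup>*\<^sup>* x y)"

definition is_P2 :: "'a set \<Rightarrow> ('a \<Rightarrow> 'a \<Rightarrow> bool) \<Rightarrow> bool" where
  "is_P2 V E \<longleftrightarrow> (\<exists>a b. a \<noteq> b \<and> V = {a, b} \<and> E a b)"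

definition total_dominating_set :: "'a set \<Rightarrow> ('a \<Rightarrow> 'a \<Rightarrow> bool) \<Rightarrow> 'a set \<Rightarrow> bool" where
  "total_dominating_set V E S \<longleftrightarrow> S \<subseteq> V \<and> (\<forall>v\<in>V. \<exists>u\<in>S. E v u)"

definition gamma_t :: "'a set \<Rightarrow> ('a \<Rightarrow> 'a \<Rightarrow> bool) \<Rightarrow> nat" where
  "gamma_t V E = (LEAST k. \<exists>S. total_dominating_set V E S \<and> card S = k)"

definition weight :: "'a set \<Rightarrow> ('a \<Rightarrow> nat) \<Rightarrow> nat" where
  "weight V f = (\<Sum>v\<in>V. f v)"

text \<open>Labelings f : V \<rightarrow> {0,1,2} (values outside V are irrelevant).\<close>
definition TRDF :: "'a set \<Rightarrow> ('a \<Rightarrow> 'a \<Rightarrow> bool) \<Rightarrow> ('a \<Rightarrow> nat) \<Rightarrow> bool" where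
  "TRDF V E f \<longleftrightarrow> (\<forall>v\<in>V. f v \<le> 2)
     \<and> (\<forall>v\<in>V. f v = 0 \<longrightarrow> (\<exists>u. E v u \<and> f u = 2))
     \<and> (\<forall>v\<in>V. f v \<noteq> 0 \<longrightarrow> (\<exists>u. E v u \<and> f u \<noteq> 0))"

definition QTRDF :: "'a set \<Rightarrow> ('a \<Rightarrow> 'a \<Rightarrow> bool) \<Rightarrow> ('a \<Rightarrow> nat) \<Rightarrow> bool" where
  "QTRDF V E f \<longleftrightarrow> (\<forall>v\<in>V. f v \<le> 2)
     \<and> (\<forall>v\<in>V. f v = 0 \<longrightarrow> (\<exists>u. E v u \<and> f u = 2))
     \<and> (\<forall>v\<in>V. f v \<noteq> 0 \<and> \<not> (\<exists>u. E v u \<and> f u \<noteq> 0) \<longrightarrow> f v = 1)"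

definition gamma_tR :: "'a set \<Rightarrow> ('a \<Rightarrow> 'a \<Rightarrow> bool) \<Rightarrow> nat" where
  "gamma_tR V E = (LEAST w. \<exists>f. TRDF V E f \<and> weight V f = w)"

definition gamma_qtR :: "'a set \<Rightarrow> ('a \<Rightarrow> 'a \<Rightarrow> bool) \<Rightarrow> nat" where
  "gamma_qtR V E = (LEAST w. \<exists>f. QTRDF V E f \<and> weight V f = w)"

end

theory Submission
  imports Defs
begin

lemma crossing:
  assumes "E\<^sup>*\<^sup>* a b" "a \<notin> C" "b \<in> C"
  shows "\<exists>u v. u \<notin> C \<and> v \<in> C \<and> E u v"
  using assms
proof (induction rule: rtranclp_induct)
  case base
  then show ?case by simp
next
  case (step y z)
  then show ?case by (cases "y \<in> C") auto
qed

lemma sum_ind_card: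
  "finite V \<Longrightarrow> (\<Sum>v\<in>V. if P v then 1 else 0) = (card {v\<in>V. P v}::nat)"
  by (simp add: sum.If_cases Int_def)

locale cg =
  fixes V :: "'a set" and E :: "'a \<Rightarrow> 'a \<Rightarrow> bool"
  assumes G: "graph V E" and C: "connected_graph V E" and N: "card V \<ge> 2"
begin

lemma fin: "finite V" using G unfolding graph_def by auto
lemma inV: "E x y \<Longrightarrow> x \<in> V \<and> y \<in> V" using G unfolding graph_def by auto
lemma sym: "E x y \<Longrightarrow> E y x" using G unfolding graph_def by auto
lemma irr: "\<not> E x x" using G unfolding graph_def by auto
lemma conn: "x \<in> V \<Longrightarrow> y \<in> V \<Longrightarrow> E\<^sup>*\<^sup>* x y" using C unfolding connected_graph_def by auto

lemma nonempty: "\<exists>a. a \<in> V"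
  using N by (metis card.empty ex_in_conv not_numeral_le_zero)

lemma has_nb:
  assumes v: "v \<in> V" shows "\<exists>u. E v u"
proof -
  have "\<exists>w\<in>V. w \<noteq> v"
  proof (rule ccontr)
    assume "\<not> ?thesis"
    then have "V \<subseteq> {v}" by auto
    then have "card V \<le> card {v}" by (intro card_mono) auto
    then show False using N by simp
  qed
  then obtain w where w: "w \<in> V" "w \<noteq> v" by blast
  have "E\<^sup>*\<^sup>* v w" using conn v w by auto
  from crossing[OF this, of "V - {v}"] w obtain u u' where
    "u \<notin> V - {v}" "u' \<in> V - {v}" "E u u'" by auto
  then show ?thesis using inV by blast
qed

lemma closed_pair:
  assumes a: "a \<in> V" and "\<forall>u. E a u \<longrightarrow> u = b" and "\<forall>u. E b u \<longrightarrow> u = a"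
  shows "V \<subseteq> {a, b}"
proof
  fix w assume w: "w \<in> V"
  show "w \<in> {a, b}"
  proof (rule ccontr)
    assume nw: "w \<notin> {a, b}"
    have "E\<^sup>*\<^sup>* w a" using conn a w by auto
    from crossing[OF this, of "{a,b}"] nw obtain u v where
      "u \<notin> {a,b}" "v \<in> {a,b}" "E u v" by auto
    then show False using assms sym by blast
  qed
qed

lemma card_pair: "V \<subseteq> {a, b} \<Longrightarrow> card V \<le> 2"
proof -
  assume "V \<subseteq> {a, b}"
  then have "card V \<le> card {a, b}" by (intro card_mono) auto
  moreover have "card {a, b} \<le> 2" by (cases "a = b") auto
  ultimately show ?thesis by simp
qed

lemma three_nb:
  assumes "card V \<ge> 3" shows "\<exists>x y z. E x y \<and> E x z \<and> y \<noteq> z"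
proof (rule ccontr)
  assume H: "\<not> ?thesis"
  obtain a where a: "a \<in> V" using nonempty by blast
  obtain b where b: "E a b" using has_nb a by blast
  have "\<forall>u. E a u \<longrightarrow> u = b" using H b by blast
  moreover have "\<forall>u. E b u \<longrightarrow> u = a" using H b sym by blast
  ultimately have "V \<subseteq> {a, b}" using closed_pair a by blast
  then show False using card_pair assms by fastforce
qed

lemma leaf_free:
  assumes "card V \<ge> 3" shows "\<exists>z\<in>V. \<forall>v\<in>V. \<exists>u. E v u \<and> u \<noteq> z"
proof (rule ccontr)
  assume H: "\<not> ?thesis"
  then have H': "\<forall>z\<in>V. \<exists>v\<in>V. \<forall>u. E v u \<longrightarrow> u = z" by blast
  obtain a where a: "a \<in> V" using nonempty by blast
  obtain v0 where v0: "v0 \<in> V" "\<forall>u. E v0 u \<longrightarrow> u = a" using H' a by blast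
  obtain v1 where v1: "v1 \<in> V" "\<forall>u. E v1 u \<longrightarrow> u = v0" using H' v0 by blast
  obtain u1 where "E v1 u1" using has_nb v1 by blast
  then have "E v1 v0" using v1 by blast
  then have "v1 = a" using v0 sym by blast
  then have "V \<subseteq> {a, v0}" using closed_pair a v0 v1 by blast
  then show False using card_pair assms by fastforce
qed

lemma V_tds: "total_dominating_set V E V"
  unfolding total_dominating_set_def using has_nb inV by blast

lemma gt_le: "total_dominating_set V E S \<Longrightarrow> gamma_t V E \<le> card S"
  unfolding gamma_t_def by (rule Least_le) blast

lemma gt_ex: "\<exists>S. total_dominating_set V E S \<and> card S = gamma_t V E"
  unfolding gamma_t_def by (rule LeastI_ex) (use V_tds in blast)

lemma tds_ge2: assumes S: "total_dominating_set V E S" shows "2 \<le> card S"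
proof -
  obtain a where a: "a \<in> V" using nonempty by blast
  obtain u where u: "u \<in> S" "E a u" using S a unfolding total_dominating_set_def by blast
  then have "u \<in> V" using inV by blast
  then obtain w where w: "w \<in> S" "E u w" using S unfolding total_dominating_set_def by blast
  have "u \<noteq> w" using w irr by blast
  have "finite S" using S fin finite_subset unfolding total_dominating_set_def by blast
  then have "card {u, w} \<le> card S" using u w by (intro card_mono) auto
  then show ?thesis using \<open>u \<noteq> w\<close> by simp
qed

lemma gt_ge2: "2 \<le> gamma_t V E" using gt_ex tds_ge2 by metis

lemma one_q: "QTRDF V E (\<lambda>_. 1)" unfolding QTRDF_def using has_nb by auto
lemma one_r: "TRDF V E (\<lambda>_. 1)" unfolding TRDF_def using has_nb by auto
lemma one_w: "weight V (\<lambda>_. 1) = card V" unfolding weight_def by simp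

lemma q_le: "QTRDF V E f \<Longrightarrow> gamma_qtR V E \<le> weight V f"
  unfolding gamma_qtR_def by (rule Least_le) blast
lemma q_ex: "\<exists>f. QTRDF V E f \<and> weight V f = gamma_qtR V E"
  unfolding gamma_qtR_def by (rule LeastI_ex) (use one_q in blast)
lemma r_le: "TRDF V E f \<Longrightarrow> gamma_tR V E \<le> weight V f"
  unfolding gamma_tR_def by (rule Least_le) blast
lemma r_ex: "\<exists>f. TRDF V E f \<and> weight V f = gamma_tR V E"
  unfolding gamma_tR_def by (rule LeastI_ex) (use one_r in blast)

lemma q_le_r: "gamma_qtR V E \<le> gamma_tR V E"
proof -
  obtain f where f: "TRDF V E f" "weight V f = gamma_tR V E" using r_ex by blast
  have "QTRDF V E f" using f(1) unfolding TRDF_def QTRDF_def by blast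
  then show ?thesis using q_le f(2) by metis
qed

lemma r_le_2t: "gamma_tR V E \<le> 2 * gamma_t V E"
proof -
  obtain S where S: "total_dominating_set V E S" "card S = gamma_t V E" using gt_ex by blast
  define f where "f = (\<lambda>v. if v \<in> S then 2 else (0::nat))"
  have "TRDF V E f" using S(1) unfolding TRDF_def total_dominating_set_def f_def by auto
  moreover have "weight V f = 2 * card S"
  proof -
    have "weight V f = sum (\<lambda>_. 2) (V \<inter> S)"
      unfolding weight_def f_def using sum.inter_restrict[OF fin, of "\<lambda>_. 2::nat" S] by simp
    also have "V \<inter> S = S" using S(1) unfolding total_dominating_set_def by blast
    finally show ?thesis by simp
  qed
  ultimately show ?thesis using r_le S(2) by metis
qed

lemma weight_split:
  assumes "\<forall>v\<in>V. f v \<le> 2"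
  shows "weight V f = card {v\<in>V. f v \<noteq> 0} + card {v\<in>V. f v = 2}"
proof -
  have "weight V f = (\<Sum>v\<in>V. (if f v \<noteq> 0 then 1 else 0) + (if f v = 2 then 1 else 0))"
    unfolding weight_def
  proof (rule sum.cong)
    fix v assume "v \<in> V"
    then have "f v = 0 \<or> f v = 1 \<or> f v = 2" using assms by auto
    then show "f v = (if f v \<noteq> 0 then 1 else 0) + (if f v = 2 then 1 else 0)" by auto
  qed simp
  also have "\<dots> = (\<Sum>v\<in>V. (if f v \<noteq> 0 then 1 else 0)) + (\<Sum>v\<in>V. (if f v = 2 then 1 else 0))"
    by (rule sum.distrib)
  finally show ?thesis using sum_ind_card[OF fin] by simp
qed

definition g :: "'a \<Rightarrow> 'a" where "g v = (SOME u. E v u)"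
lemma g: "v \<in> V \<Longrightarrow> E v (g v)" unfolding g_def using has_nb someI_ex by metis

lemma key:
  assumes f: "QTRDF V E f"
  shows "gamma_t V E \<le> card {v\<in>V. f v \<noteq> 0}"
proof -
  define P where "P = {v\<in>V. f v \<noteq> 0 \<and> (\<exists>u. E v u \<and> f u \<noteq> 0)}"
  define I where "I = {v\<in>V. f v \<noteq> 0 \<and> \<not> (\<exists>u. E v u \<and> f u \<noteq> 0)}"
  define S where "S = P \<union> g ` I"
  have "total_dominating_set V E S"
    unfolding total_dominating_set_def
  proof
    show "S \<subseteq> V" unfolding S_def P_def I_def using g inV by auto
    show "\<forall>v\<in>V. \<exists>u\<in>S. E v u"
    proof
      fix v assume v: "v \<in> V"
      show "\<exists>u\<in>S. E v u"
      proof (cases "f v = 0")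
        case True
        then obtain u where u: "E v u" "f u = 2" using f v unfolding QTRDF_def by blast
        then have "u \<in> V" using inV by blast
        then have "\<exists>w. E u w \<and> f w \<noteq> 0" using f u unfolding QTRDF_def by fastforce
        then have "u \<in> P" unfolding P_def using u \<open>u \<in> V\<close> by auto
        then show ?thesis unfolding S_def using u by blast
      next
        case False
        show ?thesis
        proof (cases "\<exists>u. E v u \<and> f u \<noteq> 0")
          case True
          then obtain u where u: "E v u" "f u \<noteq> 0" by blast
          then have "u \<in> P" unfolding P_def using inV sym False by blast
          then show ?thesis unfolding S_def using u by blast
        next
          case F2: False
          then have "v \<in> I" unfolding I_def using v False by blast
          then show ?thesis unfolding S_def using g v by blast
        qed
      qed
    qed
  qed
  then have "gamma_t V E \<le> card S" by (rule gt_le)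
  also have "card S \<le> card P + card (g ` I)" unfolding S_def by (rule card_Un_le)
  also have "\<dots> \<le> card P + card I"
  proof -
    have "finite I" using fin unfolding I_def by simp
    then show ?thesis using card_image_le[of I g] by simp
  qed
  also have "\<dots> = card (P \<union> I)"
    by (rule card_Un_disjoint[symmetric]) (auto simp: P_def I_def fin)
  also have "P \<union> I = {v\<in>V. f v \<noteq> 0}" unfolding P_def I_def by blast
  finally show ?thesis .
qed

lemma gt_nm1: assumes "card V \<ge> 3" shows "gamma_t V E \<le> card V - 1"
proof -
  obtain z where z: "z \<in> V" "\<forall>v\<in>V. \<exists>u. E v u \<and> u \<noteq> z" using leaf_free assms by blast
  have "total_dominating_set V E (V - {z})"
    unfolding total_dominating_set_def using z inV by blast
  then have "gamma_t V E \<le> card (V - {z})" by (rule gt_le)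
  moreover have "card (V - {z}) = card V - 1" using z(1) fin by simp
  ultimately show ?thesis by simp
qed

lemma qD:
  assumes "QTRDF V E f"
  shows "\<And>v. v \<in> V \<Longrightarrow> f v \<le> 2"
    and "\<And>v. v \<in> V \<Longrightarrow> f v = 0 \<Longrightarrow> \<exists>u. E v u \<and> f u = 2"
  using assms unfolding QTRDF_def by blast+

lemma single2:
  assumes f: "QTRDF V E f" and x: "x \<in> V" and V2: "{v\<in>V. f v = 2} = {x}"
  shows "gamma_t V E \<le> 2 \<or> gamma_t V E + 1 \<le> card {v\<in>V. f v \<noteq> 0}"
proof -
  have fx: "f x = 2" using V2 by blast
  have q2: "\<And>v. v \<in> V \<Longrightarrow> f v = 0 \<Longrightarrow> \<exists>u. E v u \<and> f u = 2"
    using f unfolding QTRDF_def by blast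
  have q3: "\<And>v. v \<in> V \<Longrightarrow> f v \<noteq> 0 \<Longrightarrow> \<not> (\<exists>u. E v u \<and> f u \<noteq> 0) \<Longrightarrow> f v = 1"
    using f unfolding QTRDF_def by blast
  have "\<exists>u. E x u \<and> f u \<noteq> 0"
  proof (rule ccontr)
    assume "\<not> (\<exists>u. E x u \<and> f u \<noteq> 0)"
    then have "f x = 1" using q3[OF x] fx by simp
    then show False using fx by simp
  qed
  then obtain y where y: "E x y" "f y \<noteq> 0" by blast
  have yV: "y \<in> V" using y inV by blast
  have yx: "y \<noteq> x" using y irr by blast
  define B where "B = {v\<in>V. v \<noteq> x \<and> \<not> E x v}"
  have Bpos: "f v \<noteq> 0" if "v \<in> B" for v
  proof
    assume "f v = 0"
    moreover have "v \<in> V" using that unfolding B_def by blast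
    ultimately obtain u where u: "E v u" "f u = 2" using q2 by blast
    then have "u \<in> {v\<in>V. f v = 2}" using inV by blast
    then have "u = x" using V2 by blast
    then show False using u sym that unfolding B_def by blast
  qed
  show ?thesis
  proof (cases "B = {}")
    case True
    have "total_dominating_set V E {x, y}"
      unfolding total_dominating_set_def
    proof (intro conjI ballI)
      show "{x, y} \<subseteq> V" using x yV by blast
      fix v assume v: "v \<in> V"
      show "\<exists>u\<in>{x, y}. E v u"
      proof (cases "v = x")
        case True then show ?thesis using y by blast
      next
        case False
        then have "E x v" using True v unfolding B_def by blast
        then show ?thesis using sym by blast
      qed
    qed
    then have "gamma_t V E \<le> card {x, y}" by (rule gt_le)
    then show ?thesis using yx by simp
  next
    case False
    then obtain b0 where b0: "b0 \<in> B" by blast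
    have "E\<^sup>*\<^sup>* b0 x" using conn x b0 unfolding B_def by blast
    from crossing[OF this, of "insert x {v. E x v}"] b0 obtain b t where
      bt: "b \<notin> insert x {v. E x v}" "t \<in> insert x {v. E x v}" "E b t"
      unfolding B_def by auto
    have bB: "b \<in> B" using bt inV unfolding B_def by blast
    have tx: "t \<noteq> x" using bt sym by blast
    have xt: "E x t" using bt tx by blast
    define S where "S = {x, t} \<union> g ` (B - {b})"
    have "total_dominating_set V E S"
      unfolding total_dominating_set_def
    proof (intro conjI ballI)
      have "g v \<in> V" if "v \<in> B" for v using g[of v] inV that unfolding B_def by blast
      then show "S \<subseteq> V" unfolding S_def using x xt inV by blast
      fix v assume v: "v \<in> V"
      show "\<exists>u\<in>S. E v u"
      proof (cases "v = x")
        case True then show ?thesis using xt unfolding S_def by blast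
      next
        case F1: False
        show ?thesis
        proof (cases "E x v")
          case True then show ?thesis using sym unfolding S_def by blast
        next
          case False
          then have "v \<in> B" using v F1 unfolding B_def by blast
          show ?thesis
          proof (cases "v = b")
            case True
            then show ?thesis using bt(3) unfolding S_def by blast
          next
            case False
            then have "g v \<in> S" using \<open>v \<in> B\<close> unfolding S_def by blast
            then show ?thesis using g v by blast
          qed
        qed
      qed
    qed
    then have c0: "gamma_t V E \<le> card S" by (rule gt_le)
    have fB: "finite B" using fin unfolding B_def by simp
    have c1: "card S \<le> card {x, t} + card (g ` (B - {b}))" unfolding S_def by (rule card_Un_le)
    have c2: "card {x, t} \<le> 2" by (cases "x = t") auto
    have c3: "card (g ` (B - {b})) \<le> card (B - {b})" by (rule card_image_le) (use fB in simp)
    have c4: "card (B - {b}) = card B - 1" using bB by (rule card_Diff_singleton)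
    have c5: "card B \<ge> 1" using fB bB card_gt_0_iff[of B] by auto
    have d1: "card (B \<union> {x, y}) = card B + card {x, y}"
    proof (rule card_Un_disjoint)
      show "finite B" by (rule fB)
      show "finite {x, y}" by simp
      show "B \<inter> {x, y} = {}" unfolding B_def using y(1) by blast
    qed
    have d2: "card {x, y} = 2" using yx by simp
    have d3: "card (B \<union> {x, y}) \<le> card {v\<in>V. f v \<noteq> 0}"
    proof (rule card_mono)
      show "finite {v\<in>V. f v \<noteq> 0}" using fin by simp
      show "B \<union> {x, y} \<subseteq> {v\<in>V. f v \<noteq> 0}"
      proof
        fix v assume v: "v \<in> B \<union> {x, y}"
        show "v \<in> {v\<in>V. f v \<noteq> 0}"
        proof (cases "v \<in> B")
          case True
          then have "f v \<noteq> 0" by (rule Bpos)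
          moreover have "v \<in> V" using True unfolding B_def by blast
          ultimately show ?thesis by blast
        next
          case False
          then have "v = x \<or> v = y" using v by blast
          then show ?thesis using x yV fx y(2) by auto
        qed
      qed
    qed
    show ?thesis using c0 c1 c2 c3 c4 c5 d1 d2 d3 by linarith
  qed
qed

end

theorem mainTheorem2:
  fixes V :: "'a set" and E :: "'a \<Rightarrow> 'a \<Rightarrow> bool"
  assumes "graph V E" and "connected_graph V E" and "card V \<ge> 2"
  shows "gamma_t V E \<le> gamma_qtR V E \<and> gamma_qtR V E \<le> 2 * gamma_t V E
    \<and> (gamma_qtR V E = gamma_t V E \<longleftrightarrow> is_P2 V E)
    \<and> (gamma_qtR V E = gamma_t V E + 1 \<longleftrightarrow> gamma_qtR V E = 3)
    \<and> (gamma_qtR V E = 2 * gamma_t V E \<longleftrightarrow>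
         gamma_qtR V E = gamma_tR V E \<and> gamma_tR V E = 2 * gamma_t V E)"
proof -
  interpret cg V E using assms by unfold_locales
  obtain f0 where f0: "QTRDF V E f0" "weight V f0 = gamma_qtR V E" using q_ex by blast
  have f0b: "\<forall>v\<in>V. f0 v \<le> 2" using qD(1)[OF f0(1)] by blast
  have ws: "gamma_qtR V E = card {v\<in>V. f0 v \<noteq> 0} + card {v\<in>V. f0 v = 2}"
    using weight_split[OF f0b] f0 by simp
  have kt: "gamma_t V E \<le> card {v\<in>V. f0 v \<noteq> 0}" using key f0 by blast
  have A1: "gamma_t V E \<le> gamma_qtR V E" using ws kt by simp
  have A2: "gamma_qtR V E \<le> gamma_tR V E" "gamma_tR V E \<le> 2 * gamma_t V E"
    using q_le_r r_le_2t by auto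
  have A3: "gamma_qtR V E \<le> card V" using q_le[OF one_q] one_w by simp
  have A4: "2 \<le> gamma_t V E" by (rule gt_ge2)
  have fin2: "finite {v\<in>V. f0 v = 2}" using fin by simp
  have allpos: "{v\<in>V. f0 v \<noteq> 0} = V" if "{v\<in>V. f0 v = 2} = {}"
  proof -
    have "f0 v \<noteq> 0" if v: "v \<in> V" for v
    proof
      assume "f0 v = 0"
      then obtain u where "E v u" "f0 u = 2" using qD(2)[OF f0(1) v] by blast
      then show False using inV \<open>{v\<in>V. f0 v = 2} = {}\<close> by blast
    qed
    then show ?thesis by blast
  qed
  have eqn2: "card V = 2" if H: "gamma_qtR V E = gamma_t V E"
  proof -
    have c0: "card {v\<in>V. f0 v = 2} = 0" using ws kt H by simp
    then have e0: "{v\<in>V. f0 v = 2} = {}" using fin2 by simp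
    have p: "card {v\<in>V. f0 v \<noteq> 0} = card V" using allpos[OF e0] by simp
    have "gamma_t V E = card V" using ws H c0 p by linarith
    then show ?thesis using gt_nm1 N A4 by (cases "card V \<ge> 3") auto
  qed
  have P2: "is_P2 V E \<longleftrightarrow> card V = 2"
  proof
    assume "is_P2 V E"
    then show "card V = 2" unfolding is_P2_def by auto
  next
    assume "card V = 2"
    then obtain a b where ab: "V = {a, b}" "a \<noteq> b" using card_2_iff by metis
    then obtain u where u: "E a u" using has_nb by blast
    then have "u \<in> V" "u \<noteq> a" using inV irr by blast+
    then have "u = b" using ab by blast
    then show "is_P2 V E" unfolding is_P2_def using ab u by blast
  qed
  have i: "gamma_qtR V E = gamma_t V E \<longleftrightarrow> is_P2 V E"
  proof
    assume "gamma_qtR V E = gamma_t V E"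
    then show "is_P2 V E" using eqn2 P2 by blast
  next
    assume "is_P2 V E"
    then have "card V = 2" using P2 by blast
    then show "gamma_qtR V E = gamma_t V E" using A1 A3 A4 by simp
  qed
  have ii: "gamma_qtR V E = gamma_t V E + 1 \<longleftrightarrow> gamma_qtR V E = 3"
  proof
    assume H: "gamma_qtR V E = 3"
    show "gamma_qtR V E = gamma_t V E + 1"
    proof (cases "gamma_t V E = 3")
      case True
      then have "card V = 2" using eqn2 H by simp
      then show ?thesis using A3 H by simp
    next
      case False
      then show ?thesis using A1 A4 H by simp
    qed
  next
    assume H: "gamma_qtR V E = gamma_t V E + 1"
    have "\<exists>f x. QTRDF V E f \<and> weight V f = gamma_qtR V E \<and> x \<in> V \<and> {v\<in>V. f v = 2} = {x}"
    proof (cases "card {v\<in>V. f0 v = 2} = 0")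
      case True
      then have e0: "{v\<in>V. f0 v = 2} = {}" using fin2 by simp
      have p: "card {v\<in>V. f0 v \<noteq> 0} = card V" using allpos[OF e0] by simp
      have qV: "gamma_qtR V E = card V" using ws True p by linarith
      have c3: "card V \<ge> 3"
      proof (rule ccontr)
        assume "\<not> card V \<ge> 3"
        then have "card V = 2" using N by simp
        then show False using qV H A4 by simp
      qed
      then obtain x y z where xyz: "E x y" "E x z" "y \<noteq> z" using three_nb by blast
      have xV: "x \<in> V" and zV: "z \<in> V" using xyz inV by blast+
      have xz: "x \<noteq> z" and xy: "x \<noteq> y" using xyz irr by blast+
      define f1 where "f1 = (\<lambda>v. if v = x then 2 else if v = z then 0 else (1::nat))"
      have f1x: "f1 x = 2" and f1z: "f1 z = 0" and f1o: "\<And>v. v \<noteq> x \<Longrightarrow> v \<noteq> z \<Longrightarrow> f1 v = 1"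
        unfolding f1_def using xz by auto
      have f1y: "f1 y \<noteq> 0" using f1o[of y] xy xyz(3) by (cases "y = z") auto
      have q1: "QTRDF V E f1"
        unfolding QTRDF_def
      proof (intro conjI ballI impI)
        fix v assume "v \<in> V"
        show "f1 v \<le> 2" unfolding f1_def by simp
      next
        fix v assume v: "v \<in> V" "f1 v = 0"
        then have "v = z" using f1x f1o by (metis zero_neq_numeral zero_neq_one)
        then show "\<exists>u. E v u \<and> f1 u = 2" using xyz(2) sym f1x by blast
      next
        fix v assume v: "v \<in> V" "f1 v \<noteq> 0 \<and> \<not> (\<exists>u. E v u \<and> f1 u \<noteq> 0)"
        then have "v \<noteq> x" using xyz(1) f1y by blast
        moreover have "v \<noteq> z" using v f1z by blast
        ultimately show "f1 v = 1" using f1o by blast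
      qed
      have "{v\<in>V. f1 v \<noteq> 0} = V - {z}" unfolding f1_def using xz by auto
      moreover have "{v\<in>V. f1 v = 2} = {x}" unfolding f1_def using xV by auto
      moreover have "\<forall>v\<in>V. f1 v \<le> 2" unfolding f1_def by auto
      ultimately have "weight V f1 = card (V - {z}) + 1" using weight_split by simp
      also have "\<dots> = card V" using card_Diff_singleton[OF zV] c3 by arith
      finally have "weight V f1 = gamma_qtR V E" using qV by simp
      then have "QTRDF V E f1 \<and> weight V f1 = gamma_qtR V E \<and> x \<in> V \<and> {v\<in>V. f1 v = 2} = {x}"
        using q1 xV \<open>{v\<in>V. f1 v = 2} = {x}\<close> by (intro conjI)
      then show ?thesis by (rule exI[of _ f1, OF exI[of _ x]])
    next
      case False
      then have "card {v\<in>V. f0 v = 2} = 1" using ws kt H by simp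
      then obtain x where "{v\<in>V. f0 v = 2} = {x}" by (rule card_1_singletonE)
      then have "QTRDF V E f0 \<and> weight V f0 = gamma_qtR V E \<and> x \<in> V \<and> {v\<in>V. f0 v = 2} = {x}"
        using f0 by (intro conjI) auto
      then show ?thesis by (rule exI[of _ f0, OF exI[of _ x]])
    qed
    then obtain f x where f: "QTRDF V E f" "weight V f = gamma_qtR V E" "x \<in> V"
      "{v\<in>V. f v = 2} = {x}" by (elim exE conjE)
    have "\<forall>v\<in>V. f v \<le> 2" using qD(1)[OF f(1)] by blast
    then have "gamma_qtR V E = card {v\<in>V. f v \<noteq> 0} + 1" using weight_split f by simp
    moreover have "gamma_t V E \<le> 2 \<or> gamma_t V E + 1 \<le> card {v\<in>V. f v \<noteq> 0}"
      using single2 f by blast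
    ultimately show "gamma_qtR V E = 3" using H A4 by linarith
  qed
  have iii: "gamma_qtR V E = 2 * gamma_t V E \<longleftrightarrow>
         gamma_qtR V E = gamma_tR V E \<and> gamma_tR V E = 2 * gamma_t V E"
    using A2 by auto
  have A5: "gamma_qtR V E \<le> 2 * gamma_t V E" using A2 by (rule le_trans)
  show ?thesis
    apply (intro conjI)
        apply (rule A1)
       apply (rule A5)
      apply (rule i)
     apply (rule ii)
    apply (rule iii)
    done
qed

end
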